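(* Let $\lambda$ be a nonzero real number. For every integer $m\ge 0$, as an identity of power series in $x$ (equivalently for $|x|<1$), $$\sum_{k=0}^{\infty}\big((0)_{m,\lambda}+(1)_{m,\lambda}+\cdots+(k)_{m,\lambda}\big)x^{k}=\frac{1}{(1-x)^{2}}\sum_{l=0}^{m}S_{1}(m,l)\lambda^{m-l}\,W_{l}\!\left(\frac{x}{1-x}\right).$$
   Context: The $\lambda$-falling factorials are $(x)_{0,\lambda}=1$, $(x)_{m,\lambda}=x(x-\lambda)\cdots(x-(m-1)\lambda)$ for $m\ge1$. The (signed) Stirling numbers of the first kind $S_1(m,l)$ are defined by $(x)_m=\sum_{l=0}^m S_1(m,l)x^l$, where $(x)_m=x(x-1)\cdots(x-m+1)$, $(x)_0=1$. The Stirling numbers of the second kind $S_2(n,k)$ are defined by $x^n=\sum_{k=0}^n S_2(n,k)(x)_k$. The geometric polynomials are $W_{n}(x)=\sum_{k=0}^{n}S_{2}(n,k)\,k!\,x^{k}$. *)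

theory Defs
  imports "HOL-Analysis.Analysis" "HOL-Combinatorics.Stirling"
begin

definition lam_ffact :: "real \<Rightarrow> nat \<Rightarrow> real \<Rightarrow> real" where
  "lam_ffact x m lam = (\<Prod>i<m. (x - real i * lam))"

text \<open>Signed Stirling numbers of the first kind: (x)_m = sum_l S1 m l x^l.
  The library's stirling is the unsigned version.\<close>
definition S1 :: "nat \<Rightarrow> nat \<Rightarrow> int" where
  "S1 m l = (-1) ^ (m - l) * int (stirling m l)"

definition geom_poly :: "nat \<Rightarrow> real \<Rightarrow> real" where
  "geom_poly n x = (\<Sum>k\<le>n. real (Stirling n k) * fact k * x ^ k)"

end

theory Submission
  imports Defs
begin

definition FF :: "nat \<Rightarrow> real \<Rightarrow> real" where
  "FF n x = (\<Prod>i = 0..<n. x - of_nat i)"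

lemma FF_Suc: "FF (Suc n) x = FF n x * (x - of_nat n)"
  by (simp add: FF_def)

lemma FF_nat: "FF n (real j) = fact n * real (j choose n)"
  unfolding FF_def by (simp add: binomial_gbinomial gbinomial_mult_fact)

lemma pow_FF: "x ^ l = (\<Sum>n\<le>l. real (Stirling l n) * FF n x)"
proof (induction l)
  case 0
  then show ?case by (simp add: FF_def)
next
  case (Suc l)
  have step: "x * FF n x = FF (Suc n) x + real n * FF n x" for n
    by (simp add: FF_Suc algebra_simps)
  have "x ^ Suc l = (\<Sum>n\<le>l. real (Stirling l n) * (x * FF n x))"
    by (simp add: Suc sum_distrib_left algebra_simps)
  also have "\<dots> = (\<Sum>n\<le>l. real (Stirling l n) * FF (Suc n) x)
      + (\<Sum>n\<le>l. real n * real (Stirling l n) * FF n x)"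
    by (simp add: step algebra_simps sum.distrib)
  also have "(\<Sum>n\<le>l. real n * real (Stirling l n) * FF n x)
      = (\<Sum>n\<le>l. real (Suc n) * real (Stirling l (Suc n)) * FF (Suc n) x)"
  proof -
    have "(\<Sum>n\<le>Suc l. real n * real (Stirling l n) * FF n x)
        = (\<Sum>n\<le>l. real (Suc n) * real (Stirling l (Suc n)) * FF (Suc n) x)"
      by (subst sum.atMost_Suc_shift) simp
    moreover have "(\<Sum>n\<le>Suc l. real n * real (Stirling l n) * FF n x)
        = (\<Sum>n\<le>l. real n * real (Stirling l n) * FF n x)"
      by simp
    ultimately show ?thesis by simp
  qed
  also have "(\<Sum>n\<le>l. real (Stirling l n) * FF (Suc n) x)
      + (\<Sum>n\<le>l. real (Suc n) * real (Stirling l (Suc n)) * FF (Suc n) x)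
      = (\<Sum>n\<le>l. real (Stirling (Suc l) (Suc n)) * FF (Suc n) x)"
    by (simp add: sum.distrib[symmetric] algebra_simps)
  also have "\<dots> = (\<Sum>n\<le>Suc l. real (Stirling (Suc l) n) * FF n x)"
    by (subst sum.atMost_Suc_shift) simp
  finally show ?case .
qed

lemma pow_choose: "real j ^ l = (\<Sum>n\<le>l. real (Stirling l n) * fact n * real (j choose n))"
  by (simp add: pow_FF FF_nat mult.assoc)

lemma lam_ffact_expand:
  assumes "lam \<noteq> 0"
  shows "lam_ffact x m lam = (\<Sum>l\<le>m. real_of_int (S1 m l) * lam ^ (m - l) * x ^ l)"
proof -
  have "lam_ffact x m lam = (\<Prod>i = 0..<m. (-lam) * (- x / lam + of_nat i))"
    unfolding lam_ffact_def using assms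
    by (intro prod.cong) (auto simp: field_simps)
  also have "\<dots> = (-lam) ^ m * pochhammer (- x / lam) m"
    by (simp only: prod.distrib prod_constant card_atLeastLessThan pochhammer_prod diff_zero)
  also have "\<dots> = (\<Sum>l\<le>m. real (stirling m l) * ((-lam) ^ m * (- x / lam) ^ l))"
    by (simp add: stirling_pochhammer[symmetric] sum_distrib_left algebra_simps)
  also have "\<dots> = (\<Sum>l\<le>m. real_of_int (S1 m l) * lam ^ (m - l) * x ^ l)"
  proof (intro sum.cong refl)
    fix l assume "l \<in> {..m}"
    hence lm: "l \<le> m" by simp
    have "(-lam) ^ m = (-lam) ^ (m - l) * (-lam) ^ l"
      using lm by (simp add: power_add[symmetric])
    moreover have "(-lam) ^ l * (- x / lam) ^ l = x ^ l"
      using assms by (simp add: power_mult_distrib[symmetric])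
    ultimately have "(-lam) ^ m * (- x / lam) ^ l = (-lam) ^ (m - l) * x ^ l"
      by (simp only: mult.assoc)
    also have "(-lam) ^ (m - l) = (-1) ^ (m - l) * lam ^ (m - l)" by (rule power_minus)
    finally have e: "(-lam) ^ m * (- x / lam) ^ l = (-1) ^ (m - l) * lam ^ (m - l) * x ^ l" .
    show "real (stirling m l) * ((-lam) ^ m * (- x / lam) ^ l) =
        real_of_int (S1 m l) * lam ^ (m - l) * x ^ l"
      unfolding e S1_def by simp
  qed
  finally show ?thesis .
qed

lemma choose_series:
  fixes x :: real
  assumes "\<bar>x\<bar> < 1"
  shows "(\<lambda>k. real (Suc k choose Suc n) * x ^ k) sums (x ^ n / (1 - x) ^ (n + 2))"
proof -
  have "\<bar>-x\<bar> < 1" using assms by simp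
  from gen_binomial_real[OF this, of "- real (n + 2)"]
  have "(\<lambda>k. (- real (n + 2) gchoose k) * (- x) ^ k) sums (1 + - x) powr (- real (n + 2))" .
  moreover have "(- real (n + 2) gchoose k) * (- x) ^ k = real ((k + n + 1) choose (n + 1)) * x ^ k" for k
  proof -
    have "(- real (n + 2) gchoose k) = (-1) ^ k * ((real (n+2) + of_nat k - 1) gchoose k)"
      by (rule gbinomial_minus)
    also have "real (n+2) + of_nat k - 1 = real (k + n + 1)" by simp
    also have "(real (k + n + 1) gchoose k) = real ((k + n + 1) choose k)"
      by (simp add: binomial_gbinomial)
    also have "(k + n + 1) choose k = (k + n + 1) choose (n + 1)"
      by (subst binomial_symmetric) auto
    finally have eq: "(- real (n + 2) gchoose k) = (-1) ^ k * real ((k + n + 1) choose (n + 1))" .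
    have pm: "(-x) ^ k = (-1) ^ k * x ^ k" by (rule power_minus)
    have one: "(-1::real) ^ k * (-1) ^ k = 1" by (simp add: power_mult_distrib[symmetric])
    have "(- real (n + 2) gchoose k) * (- x) ^ k = ((-1) ^ k * (-1) ^ k) * real ((k + n + 1) choose (n + 1)) * x ^ k"
      unfolding eq pm by (simp only: mult_ac)
    then show ?thesis unfolding one by simp
  qed
  moreover have "(1 + - x) powr (- real (n + 2)) = 1 / (1 - x) ^ (n + 2)"
  proof -
    have p: "(1 - x) powr real (n + 2) = (1 - x) ^ (n + 2)"
      using assms by (intro powr_realpow) simp
    have "(1 + - x) powr (- real (n + 2)) = inverse ((1 - x) powr real (n + 2))"
      by (simp only: diff_conv_add_uminus[symmetric] powr_minus)
    then show ?thesis by (simp only: p inverse_eq_divide)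
  qed
  ultimately have "(\<lambda>k. real ((k + n + 1) choose (n + 1)) * x ^ k) sums (1 / (1 - x) ^ (n + 2))"
    by simp
  hence "(\<lambda>k. x ^ n * (real ((k + n + 1) choose (n + 1)) * x ^ k)) sums (x ^ n * (1 / (1 - x) ^ (n + 2)))"
    by (rule sums_mult)
  hence "(\<lambda>k. (\<lambda>k. real (Suc k choose Suc n) * x ^ k) (k + n)) sums (x ^ n / (1 - x) ^ (n + 2))"
    by (simp add: power_add algebra_simps)
  hence "(\<lambda>k. real (Suc k choose Suc n) * x ^ k) sums (x ^ n / (1 - x) ^ (n + 2) + (\<Sum>i<n. real (Suc i choose Suc n) * x ^ i))"
    by (subst (asm) sums_iff_shift)
  moreover have "(\<Sum>i<n. real (Suc i choose Suc n) * x ^ i) = 0"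
    by (intro sum.neutral ballI) (simp add: binomial_eq_0 del: binomial_Suc_Suc)
  ultimately show ?thesis by simp
qed

theorem theorem7:
  fixes lam x :: real and m :: nat
  assumes "lam \<noteq> 0" and "\<bar>x\<bar> < 1"
  shows "(\<lambda>k. (\<Sum>j\<le>k. lam_ffact (real j) m lam) * x ^ k) sums
           (1 / (1 - x)^2 * (\<Sum>l\<le>m. real_of_int (S1 m l) * lam ^ (m - l) * geom_poly l (x / (1 - x))))"
proof -
  define c where "c l = real_of_int (S1 m l) * lam ^ (m - l)" for l
  have ak: "(\<Sum>j\<le>k. lam_ffact (real j) m lam) * x ^ k =
      (\<Sum>l\<le>m. c l * (\<Sum>n\<le>l. real (Stirling l n) * fact n * (real (Suc k choose Suc n) * x ^ k)))" for k
  proof -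
    have "(\<Sum>j\<le>k. lam_ffact (real j) m lam) = (\<Sum>l\<le>m. c l * (\<Sum>j\<le>k. real j ^ l))"
      by (simp add: lam_ffact_expand[OF assms(1)] c_def sum.swap[of _ "{..k}"] sum_distrib_left mult.assoc)
    also have "\<dots> = (\<Sum>l\<le>m. c l * (\<Sum>n\<le>l. real (Stirling l n) * fact n * real (Suc k choose Suc n)))"
    proof -
      have "(\<Sum>j\<le>k. real j ^ l) = (\<Sum>n\<le>l. real (Stirling l n) * fact n * real (Suc k choose Suc n))" for l
      proof -
      have "(\<Sum>j\<le>k. real j ^ l) = (\<Sum>n\<le>l. real (Stirling l n) * fact n * (\<Sum>j\<le>k. real (j choose n)))"
        by (simp add: pow_choose sum.swap[of _ "{..k}"] sum_distrib_left)
      also have "\<dots> = (\<Sum>n\<le>l. real (Stirling l n) * fact n * real (Suc k choose Suc n))"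
        by (simp add: sum_choose_upper flip: of_nat_sum)
      finally show ?thesis .
      qed
      then show ?thesis by simp
    qed
    finally show ?thesis by (simp add: sum_distrib_left sum_distrib_right mult.assoc)
  qed
  have "(\<lambda>k. (\<Sum>l\<le>m. c l * (\<Sum>n\<le>l. real (Stirling l n) * fact n * (real (Suc k choose Suc n) * x ^ k))))
      sums (\<Sum>l\<le>m. c l * (\<Sum>n\<le>l. real (Stirling l n) * fact n * (x ^ n / (1 - x) ^ (n + 2))))"
    by (intro sums_sum sums_mult choose_series assms(2))
  moreover have "(\<Sum>l\<le>m. c l * (\<Sum>n\<le>l. real (Stirling l n) * fact n * (x ^ n / (1 - x) ^ (n + 2))))
      = 1 / (1 - x)^2 * (\<Sum>l\<le>m. c l * geom_poly l (x / (1 - x)))"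
  proof -
    have t: "x ^ n / (1 - x) ^ (n + 2) = 1 / (1 - x) ^ 2 * (x / (1 - x)) ^ n" for n
      by (simp add: power_divide power_add power2_eq_square mult.commute)
    show ?thesis
      by (simp only: t) (simp add: geom_poly_def sum_distrib_left mult_ac)
  qed
  ultimately show ?thesis using ak by (simp add: c_def)
qed

end
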